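(* Let $m\geq 3$ be odd, $n=3m$, and let $\mathcal{L}_n$ be the latin square defined below. Every transversal of $\mathcal{L}_n$ contains at least one entry from each of the nine blocks $A_{11},A_{12},A_{13},A_{21},A_{22},A_{23},A_{31},A_{32},A_{33}$.
   Context: A latin square of order $n$ is viewed as its set of entries $(r,c,s)$ (symbol $s$ in row $r$, column $c$); a transversal is a set of $n$ entries containing each row, column and symbol exactly once. Let $m\ge3$ be odd and $n=3m$. The latin square $\mathcal{L}_n$ has rows, columns and symbols in $\{0,1,\dots,n-1\}$ and is partitioned into nine $m\times m$ blocks $A_{ij}$, $i,j\in\{1,2,3\}$: for $a,b\in\{0,\dots,m-1\}$, the cell in row $(i-1)m+a$ and column $(j-1)m+b$ contains $A_{ij}[a,b]$. Writing $t$ for the residue of $a+b$ modulo $m$ in $\{0,\dots,m-1\}$, $A_{ij}[a,b]=t$ if $t\neq 0$ and $i+j\equiv 2\pmod 3$; $A_{ij}[a,b]=t+m$ if $t\neq m-1$ and $i+j\equiv 0\pmod 3$; $A_{ij}[a,b]=t+2m$ if $t\neq m-1$ and $i+j\equiv1\pmod3$; $A_{ij}[a,b]=0$ if $t=0$ and $(i,j)=(1,1)$; $A_{ij}[a,b]=2m-1$ if $t=0$ and $(i,j)=(2,3)$; $A_{ij}[a,b]=3m-1$ if $t=0$ and $(i,j)=(3,2)$; $A_{ij}[a,b]=0$ if $t=m-1$ and $(i,j)\in\{(2,2),(3,3)\}$; $A_{ij}[a,b]=2m-1$ if $t=m-1$ and $(i,j)\in\{(1,2),(3,1)\}$; $A_{ij}[a,b]=3m-1$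 if $t=m-1$ and $(i,j)\in\{(1,3),(2,1)\}$. An entry of $\mathcal{L}_n$ is said to be in block $A_{ij}$ if its cell lies in that block. *)

theory Defs
  imports Main
begin

definition blk_sym :: "nat \<Rightarrow> nat \<Rightarrow> nat \<Rightarrow> nat \<Rightarrow> nat \<Rightarrow> nat" where
  "blk_sym m i j a b =
     (let t = (a + b) mod m in
      if (i + j) mod 3 = 2 then
        (if t \<noteq> 0 then t
         else if (i, j) = (1, 1) then 0
         else if (i, j) = (2, 3) then 2 * m - 1
         else 3 * m - 1)
      else if (i + j) mod 3 = 0 then
        (if t \<noteq> m - 1 then t + m
         else if (i, j) = (3, 3) then 0
         else if (i, j) = (1, 2) then 2 * m - 1
         else 3 * m - 1)
      else
        (if t \<noteq> m - 1 then t + 2 * m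
         else if (i, j) = (2, 2) then 0
         else if (i, j) = (3, 1) then 2 * m - 1
         else 3 * m - 1))"

definition blk_idx :: "nat \<Rightarrow> nat \<Rightarrow> nat" where
  "blk_idx m r = r div m + 1"

definition Lsym :: "nat \<Rightarrow> nat \<Rightarrow> nat \<Rightarrow> nat" where
  "Lsym m r c = blk_sym m (blk_idx m r) (blk_idx m c) (r mod m) (c mod m)"

definition Lsq :: "nat \<Rightarrow> (nat \<times> nat \<times> nat) set" where
  "Lsq m = {(r, c, s). r < 3 * m \<and> c < 3 * m \<and> s = Lsym m r c}"

definition is_transversal :: "nat \<Rightarrow> (nat \<times> nat \<times> nat) set \<Rightarrow> (nat \<times> nat \<times> nat) set \<Rightarrow> bool" where
  "is_transversal n L T \<longleftrightarrow> T \<subseteq> L \<and> finite T \<and> card T = n \<and>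
     (\<forall>r<n. \<exists>!e. e \<in> T \<and> fst e = r) \<and>
     (\<forall>c<n. \<exists>!e. e \<in> T \<and> fst (snd e) = c) \<and>
     (\<forall>s<n. \<exists>!e. e \<in> T \<and> snd (snd e) = s)"

definition in_block :: "nat \<Rightarrow> nat \<Rightarrow> nat \<Rightarrow> nat \<times> nat \<times> nat \<Rightarrow> bool" where
  "in_block m i j e \<longleftrightarrow> blk_idx m (fst e) = i \<and> blk_idx m (fst (snd e)) = j"

end

theory Submission
  imports Defs
begin


definition ind :: "bool \<Rightarrow> int" where "ind P = (if P then 1 else 0)"

lemma ind_card: "finite A \<Longrightarrow> (\<Sum>x\<in>A. ind (P x)) = int (card {x\<in>A. P x})"
  by (simp add: ind_def sum.inter_filter[symmetric])

lemma div_iff: "(m::nat) > 0 \<Longrightarrow> r div m = i \<longleftrightarrow> m*i \<le> r \<and> r < m * Suc i"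
proof
  assume "m > 0" "r div m = i"
  then have h: "r = m * i + r mod m" using mult_div_mod_eq[of m r] by simp
  have "r mod m < m" using \<open>m > 0\<close> by simp
  then show "m*i \<le> r \<and> r < m * Suc i" using h unfolding mult_Suc_right by linarith
next
  assume "m*i \<le> r \<and> r < m * Suc i" then show "r div m = i" by (simp add: div_nat_eqI)
qed

lemma ind_delta: "finite A \<Longrightarrow> e0 \<in> A \<Longrightarrow> (\<Sum>e\<in>A. ind (e = e0 \<and> P e)) = ind (P e0)"
proof -
  assume f: "finite A" and e: "e0 \<in> A"
  have "(\<Sum>e\<in>A. ind (e = e0 \<and> P e)) = (\<Sum>e\<in>A. if e = e0 then ind (P e0) else 0)"
    by (rule sum.cong) (auto simp: ind_def)
  also have "\<dots> = ind (P e0)" using f e by simp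
  finally show ?thesis .
qed

lemma count_block: assumes "m > 0" "i < 3" shows "(\<Sum>r<3*m. ind (r div m = i)) = int m"
proof -
  have le: "i*m + m \<le> m*3" using mult_le_mono1[of "i+1" 3 m] assms by (simp add: algebra_simps)
  have "{r \<in> {..<3*m}. r div m = i} = {i*m..<i*m+m}"
  proof (intro set_eqI iffI)
    fix x assume "x \<in> {i*m..<i*m+m}"
    then have "i*m \<le> x" "x < i*m+m" by auto
    moreover have "x < 3*m" using le \<open>x < i*m+m\<close> by linarith
    ultimately show "x \<in> {r \<in> {..<3*m}. r div m = i}" using assms by (simp add: div_iff mult.commute)
  qed (use assms in \<open>auto simp: div_iff mult.commute\<close>)
  then show ?thesis by (simp add: ind_card)
qed

lemma count_range: "hi \<le> n \<Longrightarrow> (\<Sum>r<n. ind (lo \<le> r \<and> r < hi)) = int (hi - lo)"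
proof -
  assume "hi \<le> n"
  then have "{r \<in> {..<n}. lo \<le> r \<and> r < hi} = {lo..<hi}" by auto
  then show ?thesis by (simp add: ind_card)
qed

lemma gauss_dvd: assumes "odd m" shows "int m dvd (\<Sum>s<3*m. int s)"
proof -
  obtain k where k: "m = 2*k+1" using assms oddE by blast
  have "{..<3*m} = {0..3*m-1}" using k by auto
  then have "2 * (\<Sum>s<3*m. int s) = int (3*m-1) * (int (3*m-1) + 1)"
    using double_gauss_sum[of "3*m-1", where 'a=int] by simp
  also have "\<dots> = 2 * (int m * (3*(3*int k+1)))" using k by (simp add: algebra_simps)
  finally show ?thesis by simp
qed

lemma s_all_one:
  fixes c0 c1 c2 :: nat
  assumes "c0 < 3" "c1 < 3" "c2 < 3"
   "3 dvd ((ind (c0 = 0) + ind (c1 = 0) + ind (c2 = 0)) - (ind (c0 = 1) + ind (c1 = 1) + ind (c2 = 1)))"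
   "3 dvd ((ind (c0 = 1) + ind (c1 = 1) + ind (c2 = 1)) - (ind (c0 = 2) + ind (c1 = 2) + ind (c2 = 2)))"
   "ind (c0 \<noteq> 0) - ind (c1 = 0) - ind (c2 = 0) = 0"
  shows "ind (c0 = 0) + ind (c1 = 0) + ind (c2 = 0) = 1 \<and> ind (c0 = 1) + ind (c1 = 1) + ind (c2 = 1) = 1
     \<and> ind (c0 = 2) + ind (c1 = 2) + ind (c2 = 2) = 1"
proof -
  have "c0 = 0 \<or> c0 = 1 \<or> c0 = 2" "c1 = 0 \<or> c1 = 1 \<or> c1 = 2" "c2 = 0 \<or> c2 = 1 \<or> c2 = 2" using assms by auto
  then show ?thesis using assms(4-6) by (elim disjE) (simp_all add: ind_def)
qed

lemma final_arith:
  fixes x :: "nat \<Rightarrow> nat \<Rightarrow> int" and m :: int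
  assumes r0: "x 0 0 + x 0 1 + x 0 2 = m" and r1: "x 1 0 + x 1 1 + x 1 2 = m" and r2: "x 2 0 + x 2 1 + x 2 2 = m"
    and c0: "x 0 0 + x 1 0 + x 2 0 = m" and c1: "x 0 1 + x 1 1 + x 2 1 = m" and c2: "x 0 2 + x 1 2 + x 2 2 = m"
    and k0: "x 0 0 + x 1 2 + x 2 1 = m" and k1: "x 0 1 + x 1 0 + x 2 2 = m" and k2: "x 0 2 + x 1 1 + x 2 0 = m"
    and nn: "\<forall>i<3. \<forall>j<3. x i j \<ge> 0"
    and p0: "i0 < 3" "x i0 i0 \<ge> 1"
    and p1: "(i1,j1) \<in> {(0,1),(1,2),(2,0)}" "x i1 j1 \<ge> 1"
    and p2: "(i2,j2) \<in> {(0,2),(1,0),(2,1)}" "x i2 j2 \<ge> 1"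
    and ij: "i < 3" "j < 3" "x i j = 0"
  shows False
proof -
  have e: "x 1 1 = x 0 0" "x 2 2 = x 0 0" "x 1 2 = x 0 1" "x 2 0 = x 0 1" "x 1 0 = x 0 2" "x 2 1 = x 0 2"
    using r0 r1 r2 c0 c1 c2 k0 k1 k2 by linarith+
  have "i0 = 0 \<or> i0 = 1 \<or> i0 = 2" using p0 by auto
  moreover have "i = 0 \<or> i = 1 \<or> i = 2" "j = 0 \<or> j = 1 \<or> j = 2" using ij by auto
  ultimately show False using p0(2) p1 p2 ij(3) e
    by (elim disjE) auto
qed

lemma core:
  fixes m i j a b s :: nat
  assumes m3: "m \<ge> 3" and i: "i < 3" and j: "j < 3" and a: "a < m" and b: "b < m"
      and s: "s = blk_sym m (i+1) (j+1) a b"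
  shows "s < 3*m \<and>
     (s \<noteq> 0 \<and> s \<noteq> 2*m-1 \<and> s \<noteq> 3*m-1 \<longrightarrow> (s < m \<longrightarrow> (i+j) mod 3 = 0) \<and> (m \<le> s \<and> s < 2*m \<longrightarrow> (i+j) mod 3 = 1) \<and> (2*m \<le> s \<longrightarrow> (i+j) mod 3 = 2)) \<and>
     (s = 0 \<longrightarrow> i = j) \<and>
     (s = 2*m-1 \<longrightarrow> (i,j) \<in> {(0,1),(1,2),(2,0)}) \<and>
     (s = 3*m-1 \<longrightarrow> (i,j) \<in> {(0,2),(1,0),(2,1)}) \<and>
     int s - int a - int b - (ind (s = 0 \<and> (i+j) mod 3 \<noteq> 0) - ind (s = 2*m-1 \<and> (i+j) mod 3 = 0) - ind (s = 3*m-1 \<and> (i+j) mod 3 = 0)) \<in> {- int m, 0, int m, 2 * int m, 3 * int m}"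
proof -
  have t: "(a+b) mod m = (if a + b < m then a + b else a + b - m)"
    using a b by (simp add: mod_if)
  have "i = 0 \<or> i = 1 \<or> i = 2" "j = 0 \<or> j = 1 \<or> j = 2" using i j by auto
  then show ?thesis unfolding s blk_sym_def Let_def t ind_def using m3 a b
    by (elim disjE) (simp_all split: if_splits; linarith)+
qed

lemma core_rc:
  fixes m r c :: nat
  assumes m3: "m \<ge> 3" and r: "r < 3*m" and c: "c < 3*m"
  shows "Lsym m r c < 3*m \<and>
     (Lsym m r c \<noteq> 0 \<and> Lsym m r c \<noteq> 2*m-1 \<and> Lsym m r c \<noteq> 3*m-1 \<longrightarrow> (Lsym m r c < m \<longrightarrow> (r div m + c div m) mod 3 = 0) \<and> (m \<le> Lsym m r c \<and> Lsym m r c < 2*m \<longrightarrow> (r div m + c div m) mod 3 = 1) \<and> (2*m \<le> Lsym m r c \<longrightarrow> (r div m + c div m) mod 3 = 2)) \<and>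
     (Lsym m r c = 0 \<longrightarrow> r div m = c div m) \<and>
     (Lsym m r c = 2*m-1 \<longrightarrow> (r div m, c div m) \<in> {(0,1),(1,2),(2,0)}) \<and>
     (Lsym m r c = 3*m-1 \<longrightarrow> (r div m, c div m) \<in> {(0,2),(1,0),(2,1)}) \<and>
     int m dvd (int (Lsym m r c) - int r - int c - (ind (Lsym m r c = 0 \<and> (r div m + c div m) mod 3 \<noteq> 0) - ind (Lsym m r c = 2*m-1 \<and> (r div m + c div m) mod 3 = 0) - ind (Lsym m r c = 3*m-1 \<and> (r div m + c div m) mod 3 = 0)))"
proof -
  have m0: "m > 0" using m3 by simp
  have i: "r div m < 3" using r by (simp add: less_mult_imp_div_less)
  have j: "c div m < 3" using c by (simp add: less_mult_imp_div_less)
  have L: "Lsym m r c = blk_sym m (r div m + 1) (c div m + 1) (r mod m) (c mod m)"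
    by (simp add: Lsym_def blk_idx_def)
  note C = core[OF m3 i j mod_less_divisor[OF m0] mod_less_divisor[OF m0] L]
  define X where "X = int (Lsym m r c) - int (r mod m) - int (c mod m) - (ind (Lsym m r c = 0 \<and> (r div m + c div m) mod 3 \<noteq> 0) - ind (Lsym m r c = 2*m-1 \<and> (r div m + c div m) mod 3 = 0) - ind (Lsym m r c = 3*m-1 \<and> (r div m + c div m) mod 3 = 0))"
  have "X \<in> {- int m, 0, int m, 2 * int m, 3 * int m}" using C unfolding X_def by blast
  then have dX: "int m dvd X" by auto
  have rr: "int r = int (r mod m) + int m * int (r div m)"
    using mult_div_mod_eq[of m r] by (metis add.commute of_nat_add of_nat_mult)
  have cc: "int c = int (c mod m) + int m * int (c div m)"
    using mult_div_mod_eq[of m c] by (metis add.commute of_nat_add of_nat_mult)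
  have "int (Lsym m r c) - int r - int c - (ind (Lsym m r c = 0 \<and> (r div m + c div m) mod 3 \<noteq> 0) - ind (Lsym m r c = 2*m-1 \<and> (r div m + c div m) mod 3 = 0) - ind (Lsym m r c = 3*m-1 \<and> (r div m + c div m) mod 3 = 0))
     = X - int m * (int (r div m) + int (c div m))"
    unfolding X_def using rr cc by (simp add: algebra_simps)
  also have "int m dvd \<dots>" using dX by simp
  finally have D: "int m dvd (int (Lsym m r c) - int r - int c - (ind (Lsym m r c = 0 \<and> (r div m + c div m) mod 3 \<noteq> 0) - ind (Lsym m r c = 2*m-1 \<and> (r div m + c div m) mod 3 = 0) - ind (Lsym m r c = 3*m-1 \<and> (r div m + c div m) mod 3 = 0)))" .
  show ?thesis using C D by blast
qed

lemma bij_unique: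
  assumes "\<forall>e\<in>T. f e < n" "\<forall>r<n. \<exists>!e. e \<in> T \<and> f e = r"
  shows "bij_betw f T {..<n}"
  unfolding bij_betw_def inj_on_def
proof (intro conjI ballI impI)
  fix x y assume "x \<in> T" "y \<in> T" "f x = f y"
  then show "x = y" using assms by metis
next
  show "f ` T = {..<n}" using assms by (auto simp: image_def)
qed



theorem theorem15:
  fixes m :: nat and T :: "(nat \<times> nat \<times> nat) set"
  assumes "odd m" and "m \<ge> 3"
    and "is_transversal (3 * m) (Lsq m) T"
  shows "\<forall>i\<in>{1,2,3}. \<forall>j\<in>{1,2,3}. \<exists>e\<in>T. in_block m i j e"
proof -
  from assms(3) have sub: "T \<subseteq> Lsq m" and fin: "finite T"
    and rowU: "\<forall>r<3*m. \<exists>!e. e \<in> T \<and> fst e = r"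
    and colU: "\<forall>c<3*m. \<exists>!e. e \<in> T \<and> fst (snd e) = c"
    and symU: "\<forall>s<3*m. \<exists>!e. e \<in> T \<and> snd (snd e) = s"
    unfolding is_transversal_def by auto
  have m3: "m \<ge> 3" by fact
  have m0: "m > 0" using m3 by simp
  have memT: "\<And>e. e \<in> T \<Longrightarrow> fst e < 3*m \<and> fst (snd e) < 3*m \<and> snd (snd e) = Lsym m (fst e) (fst (snd e))"
    using sub unfolding Lsq_def by auto
  define I where "I = (\<lambda>e::nat\<times>nat\<times>nat. fst e div m)"
  define J where "J = (\<lambda>e::nat\<times>nat\<times>nat. fst (snd e) div m)"
  define S where "S = (\<lambda>e::nat\<times>nat\<times>nat. snd (snd e))"
  define cl where "cl = (\<lambda>e. (I e + J e) mod 3)"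
  have cr: "S e < 3*m \<and>
     (S e \<noteq> 0 \<and> S e \<noteq> 2*m-1 \<and> S e \<noteq> 3*m-1 \<longrightarrow> (S e < m \<longrightarrow> cl e = 0) \<and> (m \<le> S e \<and> S e < 2*m \<longrightarrow> cl e = 1) \<and> (2*m \<le> S e \<longrightarrow> cl e = 2)) \<and>
     (S e = 0 \<longrightarrow> I e = J e) \<and>
     (S e = 2*m-1 \<longrightarrow> (I e, J e) \<in> {(0,1),(1,2),(2,0)}) \<and>
     (S e = 3*m-1 \<longrightarrow> (I e, J e) \<in> {(0,2),(1,0),(2,1)}) \<and>
     int m dvd (int (S e) - int (fst e) - int (fst (snd e)) - (ind (S e = 0 \<and> cl e \<noteq> 0) - ind (S e = 2*m-1 \<and> cl e = 0) - ind (S e = 3*m-1 \<and> cl e = 0)))"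
    if "e \<in> T" for e
    using core_rc[OF m3, of "fst e" "fst (snd e)"] memT[OF that] unfolding S_def I_def J_def cl_def
    by simp
  have IJlt: "I e < 3" "J e < 3" if "e \<in> T" for e
    using memT[OF that] unfolding I_def J_def by (simp_all add: less_mult_imp_div_less)
  have bijR: "bij_betw fst T {..<3*m}" using memT rowU by (intro bij_unique) auto
  have bijC: "bij_betw (\<lambda>e. fst (snd e)) T {..<3*m}" using memT colU by (intro bij_unique) auto
  have bijS: "bij_betw S T {..<3*m}" using cr symU unfolding S_def by (intro bij_unique) auto
  have reR: "(\<Sum>e\<in>T. g (fst e)) = (\<Sum>r<3*m. g r)" for g :: "nat \<Rightarrow> int"
    using sum.reindex_bij_betw[OF bijR] .
  have reC: "(\<Sum>e\<in>T. g (fst (snd e))) = (\<Sum>r<3*m. g r)" for g :: "nat \<Rightarrow> int"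
    using sum.reindex_bij_betw[OF bijC] .
  have reS: "(\<Sum>e\<in>T. g (S e)) = (\<Sum>r<3*m. g r)" for g :: "nat \<Rightarrow> int"
    using sum.reindex_bij_betw[OF bijS] .
  have injS: "inj_on S T" using bijS by (simp add: bij_betw_def)
  have imS: "S ` T = {..<3*m}" using bijS by (simp add: bij_betw_def)
  have "0 \<in> S ` T" "2*m-1 \<in> S ` T" "3*m-1 \<in> S ` T" unfolding imS using m0 by auto
  then obtain e0 e1 e2 where e0: "e0 \<in> T" "S e0 = 0" and e1: "e1 \<in> T" "S e1 = 2*m-1"
    and e2: "e2 \<in> T" "S e2 = 3*m-1" by (metis imageE)
  have iff0: "S e = 0 \<longleftrightarrow> e = e0" if "e \<in> T" for e using injS e0 that by (metis inj_onD)
  have iff1: "S e = 2*m-1 \<longleftrightarrow> e = e1" if "e \<in> T" for e using injS e1 that by (metis inj_onD)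
  have iff2: "S e = 3*m-1 \<longleftrightarrow> e = e2" if "e \<in> T" for e using injS e2 that by (metis inj_onD)
  define x where "x = (\<lambda>i j. \<Sum>e\<in>T. ind (I e = i \<and> J e = j))"
  have xnn: "\<forall>i<3. \<forall>j<3. x i j \<ge> 0" unfolding x_def by (auto intro: sum_nonneg simp: ind_def)
  have xpos: "x (I e) (J e) \<ge> 1" if "e \<in> T" for e
  proof -
    have "ind (I e = I e \<and> J e = J e) \<le> x (I e) (J e)" unfolding x_def
      by (rule member_le_sum) (auto simp: ind_def that fin)
    then show ?thesis by (simp add: ind_def)
  qed
  have rows: "x i 0 + x i 1 + x i 2 = int m" if "i < 3" for i
  proof -
    have "x i 0 + x i 1 + x i 2 = (\<Sum>e\<in>T. ind (I e = i \<and> J e = 0) + ind (I e = i \<and> J e = 1) + ind (I e = i \<and> J e = 2))"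
      unfolding x_def by (simp add: sum.distrib)
    also have "\<dots> = (\<Sum>e\<in>T. ind (fst e div m = i))"
    proof (rule sum.cong)
      fix e assume "e \<in> T"
      then have "J e < 3" using IJlt by blast
      then have "J e = 0 \<or> J e = 1 \<or> J e = 2" by presburger
      then show "ind (I e = i \<and> J e = 0) + ind (I e = i \<and> J e = 1) + ind (I e = i \<and> J e = 2) = ind (fst e div m = i)"
        unfolding I_def by (auto simp: ind_def)
    qed simp
    also have "\<dots> = int m" using reR[of "\<lambda>r. ind (r div m = i)"] count_block[OF m0 that] by simp
    finally show ?thesis .
  qed
  have cols: "x 0 j + x 1 j + x 2 j = int m" if "j < 3" for j
  proof -
    have "x 0 j + x 1 j + x 2 j = (\<Sum>e\<in>T. ind (I e = 0 \<and> J e = j) + ind (I e = 1 \<and> J e = j) + ind (I e = 2 \<and> J e = j))"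
      unfolding x_def by (simp add: sum.distrib)
    also have "\<dots> = (\<Sum>e\<in>T. ind (fst (snd e) div m = j))"
    proof (rule sum.cong)
      fix e assume "e \<in> T"
      then have "I e < 3" using IJlt by blast
      then have "I e = 0 \<or> I e = 1 \<or> I e = 2" by presburger
      then show "ind (I e = 0 \<and> J e = j) + ind (I e = 1 \<and> J e = j) + ind (I e = 2 \<and> J e = j) = ind (fst (snd e) div m = j)"
        unfolding J_def by (auto simp: ind_def)
    qed simp
    also have "\<dots> = int m" using reC[of "\<lambda>r. ind (r div m = j)"] count_block[OF m0 that] by simp
    finally show ?thesis .
  qed
  have cl3: "cl e < 3" for e unfolding cl_def by simp
  have kx0: "(\<Sum>e\<in>T. ind (cl e = 0)) = x 0 0 + x 1 2 + x 2 1"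
  proof -
    have "(\<Sum>e\<in>T. ind (cl e = 0)) = (\<Sum>e\<in>T. ind (I e = 0 \<and> J e = 0) + ind (I e = 1 \<and> J e = 2) + ind (I e = 2 \<and> J e = 1))"
    proof (rule sum.cong)
      fix e assume "e \<in> T"
      then have "I e < 3" "J e < 3" using IJlt by blast+
      then have "I e = 0 \<or> I e = 1 \<or> I e = 2" "J e = 0 \<or> J e = 1 \<or> J e = 2" by presburger+
      then show "ind (cl e = 0) = ind (I e = 0 \<and> J e = 0) + ind (I e = 1 \<and> J e = 2) + ind (I e = 2 \<and> J e = 1)"
        unfolding cl_def by (elim disjE) (simp_all add: ind_def)
    qed simp
    then show ?thesis unfolding x_def by (simp add: sum.distrib)
  qed
  have kx1: "(\<Sum>e\<in>T. ind (cl e = 1)) = x 0 1 + x 1 0 + x 2 2"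
  proof -
    have "(\<Sum>e\<in>T. ind (cl e = 1)) = (\<Sum>e\<in>T. ind (I e = 0 \<and> J e = 1) + ind (I e = 1 \<and> J e = 0) + ind (I e = 2 \<and> J e = 2))"
    proof (rule sum.cong)
      fix e assume "e \<in> T"
      then have "I e < 3" "J e < 3" using IJlt by blast+
      then have "I e = 0 \<or> I e = 1 \<or> I e = 2" "J e = 0 \<or> J e = 1 \<or> J e = 2" by presburger+
      then show "ind (cl e = 1) = ind (I e = 0 \<and> J e = 1) + ind (I e = 1 \<and> J e = 0) + ind (I e = 2 \<and> J e = 2)"
        unfolding cl_def by (elim disjE) (simp_all add: ind_def)
    qed simp
    then show ?thesis unfolding x_def by (simp add: sum.distrib)
  qed
  have kx2: "(\<Sum>e\<in>T. ind (cl e = 2)) = x 0 2 + x 1 1 + x 2 0"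
  proof -
    have "(\<Sum>e\<in>T. ind (cl e = 2)) = (\<Sum>e\<in>T. ind (I e = 0 \<and> J e = 2) + ind (I e = 1 \<and> J e = 1) + ind (I e = 2 \<and> J e = 0))"
    proof (rule sum.cong)
      fix e assume "e \<in> T"
      then have "I e < 3" "J e < 3" using IJlt by blast+
      then have "I e = 0 \<or> I e = 1 \<or> I e = 2" "J e = 0 \<or> J e = 1 \<or> J e = 2" by presburger+
      then show "ind (cl e = 2) = ind (I e = 0 \<and> J e = 2) + ind (I e = 1 \<and> J e = 1) + ind (I e = 2 \<and> J e = 0)"
        unfolding cl_def by (elim disjE) (simp_all add: ind_def)
    qed simp
    then show ?thesis unfolding x_def by (simp add: sum.distrib)
  qed
  have ks: "(\<Sum>e\<in>T. ind (cl e = c)) = int m - 1 + (ind (cl e0 = c) + ind (cl e1 = c) + ind (cl e2 = c))"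
    if c3: "c < 3" for c
  proof -
    define lo where "lo = c*m + (if c = 0 then 1 else 0)"
    define hi where "hi = c*m + m - (if c = 0 then 0 else 1)"
    have pw: "ind (cl e = c) = ind (lo \<le> S e \<and> S e < hi) + ind (e = e0 \<and> cl e = c) + ind (e = e1 \<and> cl e = c) + ind (e = e2 \<and> cl e = c)"
      if eT: "e \<in> T" for e
    proof -
      have c: "c = 0 \<or> c = 1 \<or> c = 2" using c3 by presburger
      have ce: "cl e = 0 \<or> cl e = 1 \<or> cl e = 2" using cl3[of e] by presburger
      note C = cr[OF eT]
      show ?thesis
      proof (cases "e = e0 \<or> e = e1 \<or> e = e2")
        case True
        then have "S e = 0 \<or> S e = 2*m-1 \<or> S e = 3*m-1" using e0 e1 e2 by auto
        moreover have "e0 \<noteq> e1" "e0 \<noteq> e2" "e1 \<noteq> e2" using e0 e1 e2 m3 by auto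
        ultimately show ?thesis using True c m3 unfolding lo_def hi_def
          by (elim disjE) (auto simp: ind_def)
      next
        case False
        then have ns: "S e \<noteq> 0" "S e \<noteq> 2*m-1" "S e \<noteq> 3*m-1" using iff0 iff1 iff2 eT by auto
        then have "(cl e = c) = (lo \<le> S e \<and> S e < hi)" using C c ce m3 unfolding lo_def hi_def
          by (elim disjE) auto
        then show ?thesis using False by (simp add: ind_def)
      qed
    qed
    have "c = 0 \<or> c = 1 \<or> c = 2" using c3 by presburger
    then have hl: "hi \<le> 3*m" "hi - lo = m - 1" using m3 unfolding lo_def hi_def by (elim disjE; simp)+
    have "(\<Sum>e\<in>T. ind (cl e = c)) = (\<Sum>e\<in>T. ind (lo \<le> S e \<and> S e < hi)) + (\<Sum>e\<in>T. ind (e = e0 \<and> cl e = c)) + (\<Sum>e\<in>T. ind (e = e1 \<and> cl e = c)) + (\<Sum>e\<in>T. ind (e = e2 \<and> cl e = c))"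
      using pw by (simp add: sum.distrib)
    also have "(\<Sum>e\<in>T. ind (lo \<le> S e \<and> S e < hi)) = int m - 1"
      using reS[of "\<lambda>r. ind (lo \<le> r \<and> r < hi)"] count_range[OF hl(1), of lo] hl(2) m3 by simp
    finally show ?thesis using ind_delta[OF fin e0(1)] ind_delta[OF fin e1(1)] ind_delta[OF fin e2(1)] by simp
  qed
  define D where "D = ind (cl e0 \<noteq> 0) - ind (cl e1 = 0) - ind (cl e2 = 0)"
  have D0: "D = 0"
  proof -
    define dl where "dl = (\<lambda>e. ind (S e = 0 \<and> cl e \<noteq> 0) - ind (S e = 2*m-1 \<and> cl e = 0) - ind (S e = 3*m-1 \<and> cl e = 0))"
    have dv: "int m dvd (\<Sum>e\<in>T. int (S e) - int (fst e) - int (fst (snd e)) - dl e)"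
    proof (rule dvd_sum)
      fix e assume "e \<in> T"
      then show "int m dvd (int (S e) - int (fst e) - int (fst (snd e)) - dl e)" using cr[OF \<open>e \<in> T\<close>] unfolding dl_def by blast
    qed
    have "(\<Sum>e\<in>T. dl e) = (\<Sum>e\<in>T. ind (e = e0 \<and> cl e \<noteq> 0) - ind (e = e1 \<and> cl e = 0) - ind (e = e2 \<and> cl e = 0))"
    proof (rule sum.cong)
      fix e assume eT: "e \<in> T"
      show "dl e = ind (e = e0 \<and> cl e \<noteq> 0) - ind (e = e1 \<and> cl e = 0) - ind (e = e2 \<and> cl e = 0)"
        unfolding dl_def using iff0[OF eT] iff1[OF eT] iff2[OF eT] by simp
    qed simp
    also have "\<dots> = D" unfolding D_def
      using ind_delta[OF fin e0(1)] ind_delta[OF fin e1(1)] ind_delta[OF fin e2(1)] by (simp add: sum_subtractf)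
    finally have sD: "(\<Sum>e\<in>T. dl e) = D" .
    define Q where "Q = (\<Sum>r<3*m. int r)"
    have "(\<Sum>e\<in>T. int (S e) - int (fst e) - int (fst (snd e)) - dl e) = Q - Q - Q - D"
      using reS[of int] reR[of int] reC[of int] sD unfolding Q_def by (simp add: sum_subtractf)
    then have "int m dvd (Q - Q - Q - D)" using dv by simp
    moreover have "Q - Q - Q - D = - (Q + D)" by simp
    ultimately have "int m dvd (Q + D)" by (metis dvd_minus_iff)
    moreover have "int m dvd Q" unfolding Q_def using gauss_dvd[OF assms(1)] .
    ultimately have dD: "int m dvd D" using dvd_add_right_iff by blast
    have b: "-2 \<le> D" "D \<le> 1" unfolding D_def ind_def by auto
    show "D = 0"
    proof (rule ccontr)
      assume "D \<noteq> 0"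
      then have "\<bar>int m\<bar> \<le> \<bar>D\<bar>" using dvd_imp_le_int dD by blast
      then show False using b m3 by (simp add: abs_if split: if_splits)
    qed
  qed
  define s0 where "s0 = ind (cl e0 = 0) + ind (cl e1 = 0) + ind (cl e2 = 0)"
  define s1 where "s1 = ind (cl e0 = 1) + ind (cl e1 = 1) + ind (cl e2 = 1)"
  define s2 where "s2 = ind (cl e0 = 2) + ind (cl e1 = 2) + ind (cl e2 = 2)"
  have K0: "x 0 0 + x 1 2 + x 2 1 = int m - 1 + s0" using ks[of 0] kx0 unfolding s0_def by simp
  have K1: "x 0 1 + x 1 0 + x 2 2 = int m - 1 + s1" using ks[of 1] kx1 unfolding s1_def by simp
  have K2: "x 0 2 + x 1 1 + x 2 0 = int m - 1 + s2" using ks[of 2] kx2 unfolding s2_def by simp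
  have R: "x 0 0 + x 0 1 + x 0 2 = int m" "x 1 0 + x 1 1 + x 1 2 = int m" "x 2 0 + x 2 1 + x 2 2 = int m"
    using rows[of 0] rows[of 1] rows[of 2] by simp_all
  have Cc: "x 0 0 + x 1 0 + x 2 0 = int m" "x 0 1 + x 1 1 + x 2 1 = int m" "x 0 2 + x 1 2 + x 2 2 = int m"
    using cols[of 0] cols[of 1] cols[of 2] by simp_all
  have "s0 - s1 = 3 * int m - 3 * x 0 1 - 3 * x 1 0 - 3 * x 1 1" using K0 K1 R Cc by linarith
  then have "s0 - s1 = 3 * (int m - x 0 1 - x 1 0 - x 1 1)" by (simp add: algebra_simps)
  then have d01: "3 dvd (s0 - s1)" by simp
  have "s1 - s2 = 3 * x 0 0 + 3 * x 0 1 + 3 * x 1 0 - 3 * int m" using K1 K2 R Cc by linarith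
  then have "s1 - s2 = 3 * (x 0 0 + x 0 1 + x 1 0 - int m)" by (simp add: algebra_simps)
  then have d12: "3 dvd (s1 - s2)" by simp
  have all1: "s0 = 1 \<and> s1 = 1 \<and> s2 = 1"
    using s_all_one[OF cl3 cl3 cl3, of e0 e1 e2] d01 d12 D0 unfolding s0_def s1_def s2_def D_def by blast
  show ?thesis
  proof (intro ballI, rule ccontr)
    fix i j :: nat assume i: "i \<in> {1,2,3}" and j: "j \<in> {1,2,3}" and ne: "\<not> (\<exists>e\<in>T. in_block m i j e)"
    have z: "x (i-1) (j-1) = 0" unfolding x_def
    proof (rule sum.neutral, intro ballI)
      fix e assume "e \<in> T"
      then have "\<not> in_block m i j e" using ne by blast
      then show "ind (I e = i - 1 \<and> J e = j - 1) = 0" using i j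
        unfolding in_block_def blk_idx_def I_def J_def ind_def by auto
    qed
    have p0: "I e0 < 3" "x (I e0) (I e0) \<ge> 1" using IJlt[OF e0(1)] xpos[OF e0(1)] cr[OF e0(1)] e0(2) by auto
    have p1: "(I e1, J e1) \<in> {(0,1),(1,2),(2,0)}" "x (I e1) (J e1) \<ge> 1" using xpos[OF e1(1)] cr[OF e1(1)] e1(2) by auto
    have p2: "(I e2, J e2) \<in> {(0,2),(1,0),(2,1)}" "x (I e2) (J e2) \<ge> 1" using xpos[OF e2(1)] cr[OF e2(1)] e2(2) by auto
    have "i - 1 < 3" "j - 1 < 3" using i j by auto
    then show False using final_arith[OF R Cc, of "I e0" "I e1" "J e1" "I e2" "J e2" "i-1" "j-1"]
      K0 K1 K2 all1 xnn p0 p1 p2 z by simp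
  qed
qed
end
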